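(* Let $\mathbb{F}\in\{\mathbb{R},\mathbb{C}\}$, let $m\le n\le 2m$, and let $A_1,\dots,A_m$ be $2\times n$ matrices over $\mathbb{F}$, viewed as the $2\times n\times m$ tensor $(A_1;\dots;A_m)$. Suppose $\dim\langle A_1,\dots,A_m\rangle=m$. Let $\ell\le\lfloor n/2\rfloor$ be an integer such that for every choice of scalars $c_{j,t}\in\mathbb{F}$ ($1\le j\le\ell$, $\ell+1\le t\le m$), setting $A'_j=A_j+c_{j,\ell+1}A_{\ell+1}+\cdots+c_{j,m}A_m$, the $n\times 2\ell$ matrix $({A'_1}^T,\dots,{A'_\ell}^T)$ has rank $2\ell$. Then $\mathrm{rank}_{\mathbb{F}}(A_1;\dots;A_m)\ge m+\ell$.
   Context: $(A_1;\dots;A_r)$ denotes the $p\times n\times r$ tensor whose $k$-th slice is the $p\times n$ matrix $A_k$; $(X_1,\dots,X_r)$ denotes horizontal concatenation of matrices; $\langle A_1,\dots,A_m\rangle$ is the $\mathbb{F}$-linear span of the matrices. A rank-one tensor is one whose slices are $\gamma_k\,\mathbf{a}\mathbf{b}^T$ ($k=1,\dots,r$) for fixed nonzero vectors $\mathbf{a},\mathbf{b}$ and a nonzero vector $(\gamma_1,\dots,\gamma_r)$; $\mathrm{rank}_{\mathbb{F}}$ of a tensor is the minimal number of rank-one tensors over $\mathbb{F}$ summing (slicewise) to it. *)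

theory Defs
  imports Complex_Main
begin

text \<open>Conventions (0-based indices).
  A matrix with r rows and c columns over a field is a function M :: nat => nat => 'a,
  entry M i j for i < r, j < c.
  A p x n x r tensor is a function T :: nat => nat => nat => 'a, where T k is the
  k-th slice (a p x n matrix), k < r.\<close>

definition mats_lin_indep :: "nat \<Rightarrow> nat \<Rightarrow> (nat \<Rightarrow> nat \<Rightarrow> nat \<Rightarrow> 'a::field) \<Rightarrow> nat set \<Rightarrow> bool" where
  "mats_lin_indep p n M S \<longleftrightarrow>
     (\<forall>c :: nat \<Rightarrow> 'a. (\<forall>i<p. \<forall>j<n. (\<Sum>s\<in>S. c s * M s i j) = 0) \<longrightarrow> (\<forall>s\<in>S. c s = 0))"

definition span_dim :: "nat \<Rightarrow> nat \<Rightarrow> nat \<Rightarrow> (nat \<Rightarrow> nat \<Rightarrow> nat \<Rightarrow> 'a::field) \<Rightarrow> nat" where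
  "span_dim p n r M = Max {card S | S. S \<subseteq> {0..<r} \<and> mats_lin_indep p n M S}"

definition mat_rank :: "nat \<Rightarrow> nat \<Rightarrow> (nat \<Rightarrow> nat \<Rightarrow> 'a::field) \<Rightarrow> nat" where
  "mat_rank rows cols M = Max {card S | S. S \<subseteq> {0..<cols} \<and>
      (\<forall>c :: nat \<Rightarrow> 'a. (\<forall>i<rows. (\<Sum>j\<in>S. c j * M i j) = 0) \<longrightarrow> (\<forall>j\<in>S. c j = 0))}"

definition rank_one_decomp ::
  "nat \<Rightarrow> nat \<Rightarrow> nat \<Rightarrow> (nat \<Rightarrow> nat \<Rightarrow> nat \<Rightarrow> 'a::field) \<Rightarrow> nat \<Rightarrow> bool" where
  "rank_one_decomp p n r T R \<longleftrightarrow>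
     (\<exists>(a :: nat \<Rightarrow> nat \<Rightarrow> 'a) (b :: nat \<Rightarrow> nat \<Rightarrow> 'a) (g :: nat \<Rightarrow> nat \<Rightarrow> 'a).
        (\<forall>s<R. (\<exists>i<p. a s i \<noteq> 0) \<and> (\<exists>j<n. b s j \<noteq> 0) \<and> (\<exists>k<r. g s k \<noteq> 0)) \<and>
        (\<forall>k<r. \<forall>i<p. \<forall>j<n. T k i j = (\<Sum>s<R. g s k * a s i * b s j)))"

definition tensor_rank :: "nat \<Rightarrow> nat \<Rightarrow> nat \<Rightarrow> (nat \<Rightarrow> nat \<Rightarrow> nat \<Rightarrow> 'a::field) \<Rightarrow> nat" where
  "tensor_rank p n r T = (LEAST R. rank_one_decomp p n r T R)"

text \<open>A'_j = A_j + sum_{t=l}^{m-1} c j t * A_t (0-based; j < l).\<close>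
definition modified_slice ::
  "nat \<Rightarrow> nat \<Rightarrow> (nat \<Rightarrow> nat \<Rightarrow> nat \<Rightarrow> 'a::field) \<Rightarrow> (nat \<Rightarrow> nat \<Rightarrow> 'a) \<Rightarrow> nat \<Rightarrow> nat \<Rightarrow> nat \<Rightarrow> 'a" where
  "modified_slice m l A c j i q = A j i q + (\<Sum>t\<in>{l..<m}. c j t * A t i q)"

text \<open>The n x 2l matrix (A'_1^T, ..., A'_l^T) for 2 x n slices A'_j:
  its column 2*j + i (j < l, i < 2) is row i of A'_j.\<close>
definition transposed_concat ::
  "(nat \<Rightarrow> nat \<Rightarrow> nat \<Rightarrow> 'a) \<Rightarrow> nat \<Rightarrow> nat \<Rightarrow> 'a" where
  "transposed_concat B q col = B (col div 2) (col mod 2) q"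

end

theory Submission imports Defs begin
lemma span_bound:
  fixes v :: "nat \<Rightarrow> nat \<Rightarrow> 'a::field"
  assumes "finite S"
    and "\<forall>j<N. \<forall>q<n. v j q = (\<Sum>s\<in>S. h j s * b s q)"
    and "\<forall>c. (\<forall>q<n. (\<Sum>j<N. c j * v j q) = 0) \<longrightarrow> (\<forall>j<N. c j = 0)"
  shows "N \<le> card S"
  using assms
proof (induction N arbitrary: v h S)
  case 0
  then show ?case by simp
next
  case (Suc N)
  have "\<exists>q<n. v N q \<noteq> 0"
  proof (rule ccontr)
    assume "\<not> ?thesis"
    then have "\<forall>q<n. (\<Sum>j<Suc N. (if j = N then 1 else 0) * v j q) = 0"
      by (simp add: if_distrib cong: if_cong)
    then have "(if N = N then 1 else 0::'a) = 0" using Suc.prems(3)[rule_format, of "\<lambda>j. if j = N then 1 else 0" N] by simp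
    then show False by simp
  qed
  then obtain q0 where q0: "q0 < n" "v N q0 \<noteq> 0" by blast
  have "\<exists>s\<in>S. h N s \<noteq> 0"
  proof (rule ccontr)
    assume "\<not> ?thesis"
    then have "v N q0 = 0" using Suc.prems(2) q0(1) by simp
    with q0 show False by simp
  qed
  then obtain s where s: "s \<in> S" "h N s \<noteq> 0" by blast
  define r where "r j = h j s / h N s" for j
  define v' where "v' j q = v j q - r j * v N q" for j q
  define h' where "h' j t = h j t - r j * h N t" for j t
  have "\<forall>j<N. \<forall>q<n. v' j q = (\<Sum>t\<in>S-{s}. h' j t * b t q)"
  proof (intro allI impI)
    fix j q assume j: "j < N" and q: "q < n"
    have "v' j q = (\<Sum>t\<in>S. h j t * b t q) - r j * (\<Sum>t\<in>S. h N t * b t q)"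
      using Suc.prems(2) j q by (simp add: v'_def)
    also have "\<dots> = (\<Sum>t\<in>S. h' j t * b t q)"
      by (simp add: h'_def sum_subtractf sum_distrib_left algebra_simps)
    also have "\<dots> = h' j s * b s q + (\<Sum>t\<in>S-{s}. h' j t * b t q)"
      using Suc.prems(1) s(1) by (simp add: sum.remove)
    also have "h' j s = 0" using s(2) by (simp add: h'_def r_def)
    finally show "v' j q = (\<Sum>t\<in>S-{s}. h' j t * b t q)" by simp
  qed
  moreover have "\<forall>c. (\<forall>q<n. (\<Sum>j<N. c j * v' j q) = 0) \<longrightarrow> (\<forall>j<N. c j = 0)"
  proof (intro allI impI)
    fix c j assume H: "\<forall>q<n. (\<Sum>j<N. c j * v' j q) = 0" and j: "j < N"
    define c' where "c' k = (if k < N then c k else - (\<Sum>i<N. c i * r i))" for k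
    have "\<forall>q<n. (\<Sum>k<Suc N. c' k * v k q) = 0"
    proof (intro allI impI)
      fix q assume q: "q < n"
      have "(\<Sum>k<Suc N. c' k * v k q) = (\<Sum>k<N. c k * v k q) - (\<Sum>i<N. c i * r i) * v N q"
        by (simp add: c'_def)
      also have "\<dots> = (\<Sum>k<N. c k * v' k q)"
        by (simp add: v'_def sum_subtractf sum_distrib_left sum_distrib_right algebra_simps)
      finally show "(\<Sum>k<Suc N. c' k * v k q) = 0" using H q by simp
    qed
    then have "c' j = 0" using j Suc.prems(3)[rule_format, of c' j] by simp
    then show "c j = 0" using j by (simp add: c'_def)
  qed
  ultimately have "N \<le> card (S - {s})"
    using Suc.IH[of "S - {s}" v' h'] Suc.prems(1) by blast
  moreover have "card S = Suc (card (S - {s}))" by (rule card_Suc_Diff1[OF Suc.prems(1) s(1), symmetric])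
  ultimately show ?case by simp
qed

lemma core:
  fixes A :: "nat \<Rightarrow> nat \<Rightarrow> nat \<Rightarrow> 'a::field"
  assumes "finite S"
    and "\<forall>k<m. \<forall>i<2. \<forall>q<n. A k i q = (\<Sum>s\<in>S. g s k * a s i * b s q)"
    and "\<forall>c. (\<forall>i<2. \<forall>q<n. (\<Sum>k<m. c k * A k i q) = 0) \<longrightarrow> (\<forall>k<m. c k = 0)"
    and "\<forall>c d. (\<forall>q<n. (\<Sum>col<2*l. d col * transposed_concat (modified_slice m l A c) q col) = 0)
              \<longrightarrow> (\<forall>col<2*l. d col = 0)"
    and "l \<le> m"
  shows "m + l \<le> card S"
  using assms
proof (induction m arbitrary: A g S)
  case 0
  then show ?case by simp
next
  case (Suc m)
  show ?case
  proof (cases "l = Suc m")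
    case True
    have "2*l \<le> card S"
    proof (rule span_bound[where v="\<lambda>col q. A (col div 2) (col mod 2) q"
          and h="\<lambda>col s. g s (col div 2) * a s (col mod 2)" and b=b])
      show "finite S" by fact
      show "\<forall>j<2*l. \<forall>q<n. A (j div 2) (j mod 2) q = (\<Sum>s\<in>S. g s (j div 2) * a s (j mod 2) * b s q)"
      proof (intro allI impI)
        fix j q assume "j < 2*l" "q < n"
        then have "j div 2 < Suc m" using True by auto
        then show "A (j div 2) (j mod 2) q = (\<Sum>s\<in>S. g s (j div 2) * a s (j mod 2) * b s q)"
          using Suc.prems(2) \<open>q < n\<close> by simp
      qed
      show "\<forall>c. (\<forall>q<n. (\<Sum>j<2*l. c j * A (j div 2) (j mod 2) q) = 0) \<longrightarrow> (\<forall>j<2*l. c j = 0)"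
        using spec[OF Suc.prems(4), of "\<lambda>_ _. 0"] True
        by (simp add: transposed_concat_def modified_slice_def)
    qed
    then show ?thesis using True by simp
  next
    case False
    then have lm: "l \<le> m" using Suc.prems(5) by simp
    have "\<exists>i<2. \<exists>q<n. A m i q \<noteq> 0"
    proof (rule ccontr)
      assume "\<not> ?thesis"
      then have "\<forall>i<2. \<forall>q<n. (\<Sum>k<Suc m. (if k = m then 1 else 0) * A k i q) = 0"
        by (simp add: if_distrib cong: if_cong)
      then have "(if m = m then 1 else 0::'a) = 0" using Suc.prems(3)[rule_format, of "\<lambda>j. if j = m then 1 else 0" m] by simp
      then show False by simp
    qed
    then obtain i0 q0 where iq: "i0 < 2" "q0 < n" "A m i0 q0 \<noteq> 0" by blast
    have "\<exists>s\<in>S. g s m \<noteq> 0"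
    proof (rule ccontr)
      assume "\<not> ?thesis"
      then have "A m i0 q0 = 0" using Suc.prems(2) iq by simp
      with iq show False by simp
    qed
    then obtain s where s: "s \<in> S" "g s m \<noteq> 0" by blast
    define r where "r k = g s k / g s m" for k
    define A' where "A' k i q = A k i q - r k * A m i q" for k i q
    define g' where "g' t k = g t k - r k * g t m" for t k
    have dec: "\<forall>k<m. \<forall>i<2. \<forall>q<n. A' k i q = (\<Sum>t\<in>S-{s}. g' t k * a t i * b t q)"
    proof (intro allI impI)
      fix k i q :: nat assume k: "k < m" and i: "i < 2" and q: "q < n"
      have "A' k i q = (\<Sum>t\<in>S. g t k * a t i * b t q) - r k * (\<Sum>t\<in>S. g t m * a t i * b t q)"
        using Suc.prems(2) k i q by (simp add: A'_def)
      also have "\<dots> = (\<Sum>t\<in>S. g' t k * a t i * b t q)"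
        by (simp add: g'_def sum_subtractf sum_distrib_left algebra_simps)
      also have "\<dots> = g' s k * a s i * b s q + (\<Sum>t\<in>S-{s}. g' t k * a t i * b t q)"
        using Suc.prems(1) s(1) by (simp add: sum.remove)
      also have "g' s k = 0" using s(2) by (simp add: g'_def r_def)
      finally show "A' k i q = (\<Sum>t\<in>S-{s}. g' t k * a t i * b t q)" by simp
    qed
    have ind: "\<forall>c. (\<forall>i<2. \<forall>q<n. (\<Sum>k<m. c k * A' k i q) = 0) \<longrightarrow> (\<forall>k<m. c k = 0)"
    proof (intro allI impI)
      fix c j assume H: "\<forall>i<2. \<forall>q<n. (\<Sum>k<m. c k * A' k i q) = 0" and j: "j < m"
      define c' where "c' k = (if k < m then c k else - (\<Sum>i<m. c i * r i))" for k
      have "\<forall>i<2. \<forall>q<n. (\<Sum>k<Suc m. c' k * A k i q) = 0"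
      proof (intro allI impI)
        fix i q :: nat assume i: "i < 2" and q: "q < n"
        have "(\<Sum>k<Suc m. c' k * A k i q) = (\<Sum>k<m. c k * A k i q) - (\<Sum>i<m. c i * r i) * A m i q"
          by (simp add: c'_def)
        also have "\<dots> = (\<Sum>k<m. c k * A' k i q)"
          by (simp add: A'_def sum_subtractf sum_distrib_left sum_distrib_right algebra_simps)
        finally show "(\<Sum>k<Suc m. c' k * A k i q) = 0" using H i q by simp
      qed
      then have "c' j = 0" using j Suc.prems(3)[rule_format, of c' j] by simp
      then show "c j = 0" using j by (simp add: c'_def)
    qed
    have rk: "\<forall>c d. (\<forall>q<n. (\<Sum>col<2*l. d col * transposed_concat (modified_slice m l A' c) q col) = 0)
              \<longrightarrow> (\<forall>col<2*l. d col = 0)"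
    proof (intro allI)
      fix c :: "nat \<Rightarrow> nat \<Rightarrow> 'a" and d
      define c' where "c' j t = (if t < m then c j t else - (r j + (\<Sum>u\<in>{l..<m}. c j u * r u)))" for j t
      have eq: "modified_slice m l A' c = modified_slice (Suc m) l A c'"
      proof (intro ext)
        fix j i q :: nat
        have iv: "{l..<Suc m} = insert m {l..<m}" using lm by auto
        have cm: "c' j m = - (r j + (\<Sum>u\<in>{l..<m}. c j u * r u))" by (simp add: c'_def)
        have "(\<Sum>t\<in>{l..<Suc m}. c' j t * A t i q) = c' j m * A m i q + (\<Sum>t\<in>{l..<m}. c' j t * A t i q)"
          unfolding iv by (rule sum.insert) auto
        also have "(\<Sum>t\<in>{l..<m}. c' j t * A t i q) = (\<Sum>t\<in>{l..<m}. c j t * A t i q)"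
          by (rule sum.cong) (auto simp: c'_def)
        finally have s1: "(\<Sum>t\<in>{l..<Suc m}. c' j t * A t i q) = c' j m * A m i q + (\<Sum>t\<in>{l..<m}. c j t * A t i q)" .
        have "(\<Sum>t\<in>{l..<m}. c j t * A' t i q) =
            (\<Sum>t\<in>{l..<m}. c j t * A t i q) - (\<Sum>u\<in>{l..<m}. c j u * r u) * A m i q"
          by (simp add: A'_def sum_subtractf sum_distrib_left sum_distrib_right algebra_simps)
        then have s2: "(\<Sum>t\<in>{l..<m}. c j t * A' t i q) =
            (\<Sum>t\<in>{l..<m}. c j t * A t i q) - (\<Sum>u\<in>{l..<m}. c j u * r u) * A m i q" .
        show "modified_slice m l A' c j i q = modified_slice (Suc m) l A c' j i q"
          unfolding modified_slice_def s1 s2 cm by (simp add: A'_def algebra_simps)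
      qed
      show "(\<forall>q<n. (\<Sum>col<2*l. d col * transposed_concat (modified_slice m l A' c) q col) = 0)
              \<longrightarrow> (\<forall>col<2*l. d col = 0)"
        unfolding eq using Suc.prems(4) by blast
    qed
    have "m + l \<le> card (S - {s})"
      using Suc.IH[OF _ dec ind rk lm] Suc.prems(1) by blast
    moreover have "card S = Suc (card (S - {s}))" by (rule card_Suc_Diff1[OF Suc.prems(1) s(1), symmetric])
  ultimately show ?thesis by simp
  qed
qed

lemma max_full:
  assumes "Max {card S | S. S \<subseteq> {0..<N} \<and> Q S} = N" and "Q {}"
  shows "Q {0..<N}"
proof -
  let ?M = "{card S | S. S \<subseteq> {0..<N} \<and> Q S}"
  have fin: "finite ?M"
    by (rule finite_subset[of _ "card ` Pow {0..<N}"]) auto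
  have ne: "?M \<noteq> {}" using assms(2) by blast
  have "Max ?M \<in> ?M" using Max_in[OF fin ne] .
  then obtain S where S: "S \<subseteq> {0..<N}" "Q S" "card S = N" using assms(1) by auto
  then have "S = {0..<N}" by (simp add: card_subset_eq)
  then show ?thesis using S by simp
qed

lemma decomp_exists:
  fixes A :: "nat \<Rightarrow> nat \<Rightarrow> nat \<Rightarrow> 'a::field"
  shows "\<exists>R. rank_one_decomp p n m A R"
proof -
  define xs where "xs = filter (\<lambda>(k,i,q). A k i q \<noteq> 0) (List.product [0..<m] (List.product [0..<p] [0..<n]))"
  have dxs: "distinct xs" unfolding xs_def by (simp add: distinct_product)
  have sxs: "set xs = {(k,i,q). k < m \<and> i < p \<and> q < n \<and> A k i q \<noteq> 0}"
    unfolding xs_def by auto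
  define a where "a s i' = (if i' = fst (snd (xs!s)) then 1 else (0::'a))" for s i'
  define b where "b s q' = (if q' = snd (snd (xs!s)) then 1 else (0::'a))" for s q'
  define g where "g s k' = (if k' = fst (xs!s) then A (fst (xs!s)) (fst (snd (xs!s))) (snd (snd (xs!s))) else 0)" for s k'
  have "rank_one_decomp p n m A (length xs)"
    unfolding rank_one_decomp_def
  proof (rule exI[of _ a], rule exI[of _ b], rule exI[of _ g], intro conjI allI impI)
    fix s assume s: "s < length xs"
    then have "xs!s \<in> set xs" by simp
    then obtain k i q where kiq: "xs!s = (k,i,q)" "k < m" "i < p" "q < n" "A k i q \<noteq> 0"
      using sxs by auto
    show "\<exists>i<p. a s i \<noteq> 0" using kiq by (auto simp: a_def)
    show "\<exists>j<n. b s j \<noteq> 0" using kiq by (auto simp: b_def)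
    show "\<exists>k<m. g s k \<noteq> 0" using kiq by (auto simp: g_def)
  next
    fix k i q assume k: "k < m" and i: "i < p" and q: "q < n"
    define F where "F x = (if x = (k,i,q) then A k i q else 0)" for x
    have "(\<Sum>s<length xs. g s k * a s i * b s q) = (\<Sum>s<length xs. F (xs!s))"
      by (rule sum.cong) (auto simp: F_def g_def a_def b_def prod_eq_iff)
    also have "\<dots> = sum_list (map F xs)"
      by (simp add: sum_list_sum_nth atLeast0LessThan)
    also have "\<dots> = sum F (set xs)" using dxs by (simp add: sum_list_distinct_conv_sum_set)
    also have "\<dots> = A k i q"
    proof (cases "A k i q = 0")
      case True
      then show ?thesis by (simp add: F_def)
    next
      case False
      then have "(k,i,q) \<in> set xs" using sxs k i q by auto
      then show ?thesis unfolding F_def by (subst sum.delta[OF finite_set]) simp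
    qed
    finally show "A k i q = (\<Sum>s<length xs. g s k * a s i * b s q)" by simp
  qed
  then show ?thesis by blast
qed

lemma main_generic:
  fixes A :: "nat \<Rightarrow> nat \<Rightarrow> nat \<Rightarrow> 'a::field"
  assumes "n \<le> 2 * m" "span_dim 2 n m A = m" "l \<le> n div 2"
    "\<forall>c :: nat \<Rightarrow> nat \<Rightarrow> 'a. mat_rank n (2 * l) (transposed_concat (modified_slice m l A c)) = 2 * l"
  shows "tensor_rank 2 n m A \<ge> m + l"
proof -
  have lm: "l \<le> m" using assms(1,3) by linarith
  have ind: "mats_lin_indep 2 n A {0..<m}"
    using max_full[of m "mats_lin_indep 2 n A"] assms(2)
    unfolding span_dim_def by (simp add: mats_lin_indep_def)
  have rk: "\<forall>c d. (\<forall>q<n. (\<Sum>col<2*l. d col * transposed_concat (modified_slice m l A c) q col) = 0)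
              \<longrightarrow> (\<forall>col<2*l. d col = 0)"
  proof (intro allI)
    fix c :: "nat \<Rightarrow> nat \<Rightarrow> 'a" and d
    let ?M = "transposed_concat (modified_slice m l A c)"
    have "(\<lambda>S. \<forall>c :: nat \<Rightarrow> 'a. (\<forall>i<n. (\<Sum>j\<in>S. c j * ?M i j) = 0) \<longrightarrow> (\<forall>j\<in>S. c j = 0)) {0..<2*l}"
      by (rule max_full) (use assms(4) in \<open>simp_all add: mat_rank_def\<close>)
    then show "(\<forall>q<n. (\<Sum>col<2*l. d col * ?M q col) = 0) \<longrightarrow> (\<forall>col<2*l. d col = 0)"
      by (simp add: atLeast0LessThan)
  qed
  have bound: "m + l \<le> R" if "rank_one_decomp 2 n m A R" for R
  proof -
    have "\<exists>a b g. \<forall>k<m. \<forall>i<2. \<forall>j<n. A k i j = (\<Sum>s<R. g s k * a s i * b s j)"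
      using that unfolding rank_one_decomp_def by blast
    then obtain a b g where H: "\<forall>k<m. \<forall>i<2. \<forall>j<n. A k i j = (\<Sum>s<R. g s k * a s i * b s j)"
      by blast
    have "m + l \<le> card {..<R}"
      by (rule core[OF _ H _ rk lm]) (use ind in \<open>auto simp: mats_lin_indep_def atLeast0LessThan\<close>)
    then show ?thesis by simp
  qed
  show ?thesis unfolding tensor_rank_def
    using decomp_exists[of 2 n m A] by (metis LeastI_ex bound)
qed

theorem mainTheorem6:
  shows
  "(\<forall>(m::nat) (n::nat) (l::nat) (A :: nat \<Rightarrow> nat \<Rightarrow> nat \<Rightarrow> real).
      m \<le> n \<longrightarrow> n \<le> 2 * m \<longrightarrow> span_dim 2 n m A = m \<longrightarrow> l \<le> n div 2 \<longrightarrow>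
      (\<forall>c :: nat \<Rightarrow> nat \<Rightarrow> real.
          mat_rank n (2 * l) (transposed_concat (modified_slice m l A c)) = 2 * l) \<longrightarrow>
      tensor_rank 2 n m A \<ge> m + l)
   \<and>
   (\<forall>(m::nat) (n::nat) (l::nat) (A :: nat \<Rightarrow> nat \<Rightarrow> nat \<Rightarrow> complex).
      m \<le> n \<longrightarrow> n \<le> 2 * m \<longrightarrow> span_dim 2 n m A = m \<longrightarrow> l \<le> n div 2 \<longrightarrow>
      (\<forall>c :: nat \<Rightarrow> nat \<Rightarrow> complex.
          mat_rank n (2 * l) (transposed_concat (modified_slice m l A c)) = 2 * l) \<longrightarrow>
      tensor_rank 2 n m A \<ge> m + l)"
  by (intro conjI allI impI; rule main_generic; assumption)

end
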